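(* In the variation of the temporal graph discovery game in which the Discoverer does not learn the static edge set, there is an algorithm that wins the game on any temporal graph with node set $V$ and lifetime $T_{\max}$ in $|V|\,T_{\max}$ rounds.
   Context: A temporal graph $\mathcal G=(V,E,\lambda)$ with lifetime $T_{\max}$ consists of a finite undirected static graph $(V,E)$ and a labeling $\lambda:E\to\{1,\dots,T_{\max}\}$; edge $e$ is present only at time $\lambda(e)$. Infection model with parameter $\delta\in\mathbb N^+$: given seed infections $S\subseteq V\times[0,T_{\max}]$ (at most $k$ per round), a seed $(u,t)$ makes $u$ infected at time $t$; otherwise a susceptible node $u$ becomes infected at time $t$ iff some neighbour $v$ infectious at time $t$ has $\lambda(uv)=t$ (exactly one infector recorded if several exist). A node infected at time $t$ is infectious at times $t+1,\dots,t+\delta$ and resistant afterwards. The infection log records triples $(u,v,t)$ ($u$ infected $v$ at time $t$). Game (unknown static graph variant): the Discoverer knows only $V$; each round it submits seeds and the Adversary answers with an infection log consistent with the seeds under some temporal graph on $V$ consistent with all previous answers. The Discoverer wins iff the temporal graph (edges and labels) it finally submits equals the Adversary's final temporal graph consistent with all logs. *)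

theory Defs
  imports Main
begin

text \<open>A temporal graph on node set V: a static edge set (2-element subsets of V)
  together with a labelling of the edges by times in {1..Tmax}.
  The labelling is only meaningful on the edge set.\<close>

type_synonym 'v tgraph = "'v set set \<times> ('v set \<Rightarrow> nat)"

definition temporal_graph :: "'v set \<Rightarrow> nat \<Rightarrow> 'v tgraph \<Rightarrow> bool" where
  "temporal_graph V Tmax G \<longleftrightarrow>
     (\<forall>e\<in>fst G. \<exists>u v. u \<in> V \<and> v \<in> V \<and> u \<noteq> v \<and> e = {u, v}) \<and>
     (\<forall>e\<in>fst G. snd G e \<in> {1..Tmax})"

definition same_tgraph :: "'v tgraph \<Rightarrow> 'v tgraph \<Rightarrow> bool" where
  "same_tgraph G H \<longleftrightarrow> fst G = fst H \<and> (\<forall>e\<in>fst G. snd G e = snd H e)"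

text \<open>itime v = Some s: node v was infected at time s. It is infectious at s+1..s+delta.\<close>
definition infectious :: "nat \<Rightarrow> ('v \<Rightarrow> nat option) \<Rightarrow> 'v \<Rightarrow> nat \<Rightarrow> bool" where
  "infectious \<delta> itime v t \<longleftrightarrow> (\<exists>s. itime v = Some s \<and> s < t \<and> t \<le> s + \<delta>)"

definition contact :: "'v tgraph \<Rightarrow> nat \<Rightarrow> ('v \<Rightarrow> nat option) \<Rightarrow> 'v \<Rightarrow> 'v \<Rightarrow> nat \<Rightarrow> bool" where
  "contact G \<delta> itime v u t \<longleftrightarrow>
     infectious \<delta> itime v t \<and> {u, v} \<in> fst G \<and> snd G {u, v} = t"

definition infection_run ::
  "'v set \<Rightarrow> nat \<Rightarrow> nat \<Rightarrow> 'v tgraph \<Rightarrow> ('v \<times> nat) set \<Rightarrow> ('v \<Rightarrow> nat option) \<Rightarrow> bool" where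
  "infection_run V Tmax \<delta> G S itime \<longleftrightarrow>
     (\<forall>u. u \<notin> V \<longrightarrow> itime u = None) \<and>
     (\<forall>u\<in>V. \<forall>t. itime u = Some t \<longleftrightarrow>
        t \<le> Tmax \<and> (\<forall>s<t. itime u \<noteq> Some s) \<and>
        ((u, t) \<in> S \<or> (\<exists>v\<in>V. contact G \<delta> itime v u t)))"

text \<open>L is an infection log (triples (v,u,t): v infected u at t) consistent with seeds S
  under G: every non-seed infection has exactly one recorded infector, which is a valid one,
  and nothing else is recorded.\<close>
definition infection_log ::
  "'v set \<Rightarrow> nat \<Rightarrow> nat \<Rightarrow> 'v tgraph \<Rightarrow> ('v \<times> nat) set \<Rightarrow> ('v \<times> 'v \<times> nat) set \<Rightarrow> bool" where
  "infection_log V Tmax \<delta> G S L \<longleftrightarrow>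
     (\<exists>itime. infection_run V Tmax \<delta> G S itime \<and>
        (\<forall>(v, u, t)\<in>L. u \<in> V \<and> v \<in> V \<and> itime u = Some t \<and> (u, t) \<notin> S \<and> contact G \<delta> itime v u t) \<and>
        (\<forall>u\<in>V. \<forall>t. itime u = Some t \<and> (u, t) \<notin> S \<longrightarrow> (\<exists>!v. (v, u, t) \<in> L)))"

definition valid_seeds :: "'v set \<Rightarrow> nat \<Rightarrow> nat \<Rightarrow> ('v \<times> nat) set \<Rightarrow> bool" where
  "valid_seeds V Tmax k S \<longleftrightarrow> S \<subseteq> V \<times> {0..Tmax} \<and> card S \<le> k"

type_synonym 'v history = "(('v \<times> nat) set \<times> ('v \<times> 'v \<times> nat) set) list"

definition consistent ::
  "'v set \<Rightarrow> nat \<Rightarrow> nat \<Rightarrow> 'v tgraph \<Rightarrow> 'v history \<Rightarrow> bool" where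
  "consistent V Tmax \<delta> G h \<longleftrightarrow> temporal_graph V Tmax G \<and>
     (\<forall>i<length h. infection_log V Tmax \<delta> G (fst (h ! i)) (snd (h ! i)))"

text \<open>A Discoverer strategy (knowing only V, Tmax, delta, k) is a seed-choice function nxt
  and a final-guess function gs, both depending only on the history. It wins in r rounds if,
  for every play of r rounds following the strategy, every temporal graph consistent with all
  answers equals the guess (the Adversary may pick any consistent graph at the end; answers
  are legal iff some graph is consistent with them).\<close>
definition discoverer_wins ::
  "'v set \<Rightarrow> nat \<Rightarrow> nat \<Rightarrow> nat \<Rightarrow> ('v history \<Rightarrow> ('v \<times> nat) set) \<Rightarrow> ('v history \<Rightarrow> 'v tgraph)
   \<Rightarrow> nat \<Rightarrow> bool" where
  "discoverer_wins V Tmax \<delta> k nxt gs r \<longleftrightarrow>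
     (\<forall>h. valid_seeds V Tmax k (nxt h)) \<and>
     (\<forall>h. length h = r \<and> (\<forall>i<r. fst (h ! i) = nxt (take i h)) \<longrightarrow>
        (\<forall>G. consistent V Tmax \<delta> G h \<longrightarrow> same_tgraph G (gs h)))"

end

theory Submission
  imports Defs
begin

lemma run_lower:
  assumes run: "infection_run V Tmax \<delta> G {(a,s)} itime"
  shows "itime u = Some r \<Longrightarrow> s \<le> r"
proof (induction r arbitrary: u rule: less_induct)
  case (less r)
  have uV: "u \<in> V" using run less.prems unfolding infection_run_def by force
  have "(u, r) \<in> {(a,s)} \<or> (\<exists>v\<in>V. contact G \<delta> itime v u r)"
    using run uV less.prems unfolding infection_run_def by blast
  then show ?case
  proof
    assume "(u, r) \<in> {(a,s)}" then show ?thesis by simp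
  next
    assume "\<exists>v\<in>V. contact G \<delta> itime v u r"
    then obtain v r' where "itime v = Some r'" "r' < r"
      unfolding contact_def infectious_def by blast
    with less.IH[of r' v] show ?thesis by simp
  qed
qed

lemma run_at_s:
  assumes run: "infection_run V Tmax \<delta> G {(a,s)} itime"
    and "itime u = Some s"
  shows "u = a"
proof -
  have uV: "u \<in> V" using run assms(2) unfolding infection_run_def by force
  have "(u, s) \<in> {(a,s)} \<or> (\<exists>v\<in>V. contact G \<delta> itime v u s)"
    using run uV assms(2) unfolding infection_run_def by blast
  then show ?thesis
  proof
    assume "(u, s) \<in> {(a,s)}" then show ?thesis by simp
  next
    assume "\<exists>v\<in>V. contact G \<delta> itime v u s"
    then obtain v r' where "itime v = Some r'" "r' < s"
      unfolding contact_def infectious_def by blast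
    with run_lower[OF run, of v r'] show ?thesis by simp
  qed
qed

lemma reveal:
  assumes log: "infection_log V Tmax \<delta> G {(a,t-1)} L"
    and tg: "temporal_graph V Tmax G"
    and e: "{a,b} \<in> fst G" and lab: "snd G {a,b} = t"
    and d: "\<delta> \<ge> 1" and aV: "a \<in> V"
  shows "(a,b,t) \<in> L"
proof -
  obtain itime where run: "infection_run V Tmax \<delta> G {(a,t-1)} itime"
    and L1: "\<forall>(v, u, t')\<in>L. u \<in> V \<and> v \<in> V \<and> itime u = Some t' \<and> (u, t') \<notin> {(a,t-1)} \<and> contact G \<delta> itime v u t'"
    and L2: "\<forall>u\<in>V. \<forall>t'. itime u = Some t' \<and> (u, t') \<notin> {(a,t-1)} \<longrightarrow> (\<exists>!v. (v, u, t') \<in> L)"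
    using log unfolding infection_log_def by (elim exE conjE) (rule that)
  have iff: "\<And>u r. u \<in> V \<Longrightarrow> itime u = Some r \<longleftrightarrow>
        r \<le> Tmax \<and> (\<forall>s<r. itime u \<noteq> Some s) \<and>
        ((u, r) \<in> {(a,t-1)} \<or> (\<exists>v\<in>V. contact G \<delta> itime v u r))"
    using run unfolding infection_run_def by blast
  obtain x y where xy: "x \<in> V" "y \<in> V" "x \<noteq> y" "{a,b} = {x,y}"
    using tg e unfolding temporal_graph_def by blast
  have ab: "a \<noteq> b" and bV: "b \<in> V" using xy aV by (auto simp: doubleton_eq_iff)
  have t1: "t \<ge> 1" "t \<le> Tmax" using tg e lab unfolding temporal_graph_def by auto
  have ia: "itime a = Some (t-1)"
  proof -
    have "\<forall>s'<t-1. itime a \<noteq> Some s'"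
      using run_lower[OF run, of a] by fastforce
    moreover have "(a, t-1) \<in> {(a,t-1)}" by simp
    moreover have "t - 1 \<le> Tmax" using t1 by simp
    ultimately show ?thesis using iff[OF aV, of "t-1"] by blast
  qed
  have infa: "infectious \<delta> itime a t" unfolding infectious_def using ia t1 d by auto
  have ct: "contact G \<delta> itime a b t"
    unfolding contact_def using infa e lab by (simp add: insert_commute)
  have ib: "itime b = Some t"
  proof -
    have "\<forall>s'<t. itime b \<noteq> Some s'"
    proof (intro allI impI notI)
      fix s' assume "s' < t" "itime b = Some s'"
      then have "s' = t - 1" using run_lower[OF run, of b s'] by auto
      then have "b = a" using run_at_s[OF run] \<open>itime b = Some s'\<close> by simp
      with ab show False by simp
    qed
    then show ?thesis using iff[OF bV, of t] t1 ct aV by blast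
  qed
  have "(b, t) \<notin> {(a,t-1)}" using ab by simp
  then obtain v where v: "(v, b, t) \<in> L" using L2 bV ib by blast
  then have "contact G \<delta> itime v b t" using L1 by blast
  then obtain r' where "itime v = Some r'" "r' < t"
    unfolding contact_def infectious_def by blast
  moreover have "t - 1 \<le> r'" using run_lower[OF run] calculation(1) by blast
  ultimately have "r' = t - 1" by simp
  then have "v = a" using run_at_s[OF run] \<open>itime v = Some r'\<close> by simp
  then show ?thesis using v by simp
qed

theorem mainTheorem14:
  fixes V :: "'v set" and Tmax \<delta> k :: nat
  assumes "finite V" and "\<delta> \<ge> 1" and "k \<ge> 1"
  shows "\<exists>nxt gs. discoverer_wins V Tmax \<delta> k nxt gs (card V * Tmax)"
proof -
  obtain vs where vs: "set vs = V" "distinct vs" using assms(1) finite_distinct_list by blast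
  have lvs: "length vs = card V" using vs distinct_card by fastforce
  define nxt :: "'v history \<Rightarrow> ('v \<times> nat) set" where
    "nxt h = (if length h < card V * Tmax then {(vs ! (length h div Tmax), length h mod Tmax)} else {})" for h
  define E :: "'v history \<Rightarrow> 'v set set" where
    "E h = {e. \<exists>p\<in>set h. \<exists>u v t. e = {u,v} \<and> (v,u,t) \<in> snd p}" for h
  define gs :: "'v history \<Rightarrow> 'v tgraph" where
    "gs h = (E h, \<lambda>e. SOME t. \<exists>p\<in>set h. \<exists>u v. e = {u,v} \<and> (v,u,t) \<in> snd p)" for h
  have valid: "valid_seeds V Tmax k (nxt h)" for h
  proof (cases "length h < card V * Tmax")
    case True
    then have "length h div Tmax < card V" "Tmax > 0"
      by (auto simp: less_mult_imp_div_less) (metis gr0I mult_0_right not_less0)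
    then have "vs ! (length h div Tmax) \<in> V" using vs lvs nth_mem by metis
    then show ?thesis using True \<open>Tmax > 0\<close> assms(3)
      unfolding valid_seeds_def nxt_def by auto
  next
    case False
    then show ?thesis unfolding valid_seeds_def nxt_def by auto
  qed
  have win: "same_tgraph G (gs h)"
    if len: "length h = card V * Tmax" and hist: "\<forall>i<card V * Tmax. fst (h ! i) = nxt (take i h)"
      and cons: "consistent V Tmax \<delta> G h" for h G
  proof -
    have tg: "temporal_graph V Tmax G" using cons unfolding consistent_def by blast
    have logs: "infection_log V Tmax \<delta> G (fst p) (snd p)" if pin: "p \<in> set h" for p
    proof -
      obtain i where "i < length h" "p = h ! i" using pin by (auto simp: in_set_conv_nth)
      then show ?thesis using cons unfolding consistent_def by blast
    qed
    have sound: "{u,v} \<in> fst G \<and> snd G {u,v} = t" if pin: "p \<in> set h" and pv: "(v,u,t) \<in> snd p" for p u v t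
    proof -
      obtain itime where "\<forall>(v, u, t)\<in>snd p. contact G \<delta> itime v u t"
        using logs[OF pin] unfolding infection_log_def by blast
      then have "contact G \<delta> itime v u t" using pv by blast
      then show ?thesis unfolding contact_def by blast
    qed
    have complete: "\<exists>p\<in>set h. (a,b,snd G {a,b}) \<in> snd p" if ein: "{a,b} \<in> fst G" and aV: "a \<in> V" for a b
    proof -
      define t where "t = snd G {a,b}"
      have t1: "t \<ge> 1" "t \<le> Tmax" using tg ein unfolding temporal_graph_def t_def by auto
      obtain j where j: "j < card V" "vs ! j = a" using vs lvs aV by (metis in_set_conv_nth)
      obtain r where r: "r = t - 1" "r < Tmax" using t1 by fastforce
      define i where "i = j * Tmax + r"
      have idiv: "i div Tmax = j" "i mod Tmax = t - 1" using r unfolding i_def by auto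
      have "i < j * Tmax + Tmax" using r unfolding i_def by simp
      also have "\<dots> \<le> card V * Tmax" using j(1)
        by (metis Suc_leI mult_Suc mult_le_mono1 add.commute)
      finally have ilt: "i < card V * Tmax" .
      have f1: "fst (h ! i) = nxt (take i h)" using hist ilt by blast
      have f2: "length (take i h) = i" using ilt len by simp
      have "nxt (take i h) = {(vs ! (i div Tmax), i mod Tmax)}"
        unfolding nxt_def f2 using ilt by simp
      then have "fst (h ! i) = {(a, t - 1)}" using f1 idiv j by simp
      moreover have "h ! i \<in> set h" using ilt len by simp
      ultimately have "infection_log V Tmax \<delta> G {(a, t - 1)} (snd (h ! i))"
        using logs[of "h ! i"] by simp
      then have "(a,b,t) \<in> snd (h ! i)"
        using reveal[OF _ tg ein t_def[symmetric] assms(2) aV] by blast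
      then show ?thesis using \<open>h ! i \<in> set h\<close> t_def by blast
    qed
    have fstEq: "fst G = E h"
    proof
      show "fst G \<subseteq> E h"
      proof
        fix e assume "e \<in> fst G"
        then obtain a b where ab: "a \<in> V" "e = {a,b}" using tg unfolding temporal_graph_def by blast
        then obtain p where "p \<in> set h" "(a,b,snd G {a,b}) \<in> snd p" using complete \<open>e \<in> fst G\<close> by blast
        then show "e \<in> E h" unfolding E_def using ab by (auto simp: insert_commute)
      qed
    next
      show "E h \<subseteq> fst G"
      proof
        fix e assume "e \<in> E h"
        then obtain p u v t where "p \<in> set h" "e = {u,v}" "(v,u,t) \<in> snd p"
          unfolding E_def by blast
        then show "e \<in> fst G" using sound[of p v u t] by simp
      qed
    qed
    have labEq: "snd G e = snd (gs h) e" if eG: "e \<in> fst G" for e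
    proof -
      obtain a b where ab: "a \<in> V" "e = {a,b}" using tg eG unfolding temporal_graph_def by blast
      have eab: "{a,b} \<in> fst G" using eG ab(2) by simp
      obtain p where p: "p \<in> set h" "(a,b,snd G {a,b}) \<in> snd p" using complete[OF eab ab(1)] by blast
      have ex: "\<exists>p\<in>set h. \<exists>u v. e = {u,v} \<and> (v,u,snd G e) \<in> snd p"
      proof (rule bexI[OF _ p(1)])
        show "\<exists>u v. e = {u,v} \<and> (v,u,snd G e) \<in> snd p"
          using p(2) ab by (intro exI[of _ b] exI[of _ a]) (simp add: insert_commute)
      qed
      show ?thesis unfolding gs_def snd_conv
      proof (rule someI2[of _ "snd G e"])
        show "\<exists>p\<in>set h. \<exists>u v. e = {u,v} \<and> (v,u,snd G e) \<in> snd p" by (rule ex)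
      next
        fix t assume "\<exists>p\<in>set h. \<exists>u v. e = {u,v} \<and> (v,u,t) \<in> snd p"
        then obtain p u v where "p \<in> set h" "e = {u,v}" "(v,u,t) \<in> snd p" by blast
        then show "snd G e = t" using sound[of p v u t] by simp
      qed
    qed
    show ?thesis unfolding same_tgraph_def
    proof (intro conjI ballI)
      show "fst G = fst (gs h)" using fstEq by (simp add: gs_def)
    next
      fix e assume "e \<in> fst G" then show "snd G e = snd (gs h) e" by (rule labEq)
    qed
  qed
  have "discoverer_wins V Tmax \<delta> k nxt gs (card V * Tmax)"
    unfolding discoverer_wins_def
  proof (intro conjI allI impI)
    fix h show "valid_seeds V Tmax k (nxt h)" by (rule valid)
  next
    fix h G
    assume A: "length h = card V * Tmax \<and> (\<forall>i<card V * Tmax. fst (h ! i) = nxt (take i h))"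
      and C: "consistent V Tmax \<delta> G h"
    from A have A1: "length h = card V * Tmax" and A2: "\<forall>i<card V * Tmax. fst (h ! i) = nxt (take i h)"
      by auto
    show "same_tgraph G (gs h)" by (rule win[OF A1 A2 C])
  qed
  then show ?thesis by blast
qed

end
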